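(* Let $B,U\ge 1$, $\mathbf{H}\in\mathbb{C}^{B\times U}$, $\mathbf{j}\in\mathbb{C}^B$, and let $\mathbf{y}=\mathbf{H}\mathbf{s}+\mathbf{j}w+\mathbf{n}\in\mathbb{C}^B$, where $\mathbf{s}\in\mathbb{C}^U$ has independent zero-mean entries with $\mathbb{E}[\mathbf{s}\mathbf{s}^H]=E_s\mathbf{I}_U$, $w$ is circularly-symmetric complex Gaussian with variance $E_J$, $\mathbf{n}$ is i.i.d. circularly-symmetric complex Gaussian with per-entry variance $N_0$, and $\mathbf{s},w,\mathbf{n}$ are mutually independent. Let $\mathcal{A},\mathcal{B}\subset\mathbb{C}$ and set $$\mathbf{C}_{\mathbf{y}}=E_s\mathbf{H}\mathbf{H}^H+E_J\mathbf{j}\mathbf{j}^H+N_0\mathbf{I}_B,$$ the covariance matrix of $\mathbf{y}$. Consider the optimization problem $$\{\hat\beta,\hat{\mathbf{b}},\hat{\mathbf{a}}\}=\arg\min_{\beta\in\mathbb{C},\,\mathbf{b}\in\mathcal{B}^B,\,\mathbf{a}\in\mathcal{A}^B}\ \mathbb{E}_{\mathbf{s},w,\mathbf{n}}\big[\|\beta\mathbf{b}\mathbf{a}^H\mathbf{y}-\mathbf{j}w\|^2\big].$$ Then this problem is separable in $\mathbf{b}$ and $\mathbf{a}$, and its solution is given by $$\hat{\mathbf{b}}=\arg\max_{\mathbf{b}\in\mathcal{B}^B}\frac{|\mathbf{j}^H\mathbf{b}|^2}{\|\mathbf{b}\|^2},\qquad \hat{\mathbf{a}}=\arg\max_{\mathbf{a}\in\mathcal{A}^B}\frac{|\mathbf{j}^H\mathbf{a}|^2}{\mathbf{a}^H\mathbf{C}_{\mathbf{y}}\mathbf{a}},\qquad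 \hat\beta=\frac{E_J\,\mathbf{j}^H\hat{\mathbf{a}}\,\hat{\mathbf{b}}^H\mathbf{j}}{\|\hat{\mathbf{b}}\|^2\,\hat{\mathbf{a}}^H\mathbf{C}_{\mathbf{y}}\hat{\mathbf{a}}}.$$
   Context: This arises in choosing an analog transform of the form $\mathbf{P}=\mathbf{I}_B-\beta\mathbf{b}\mathbf{a}^H$ applied to the received vector $\mathbf{y}$ of a multi-antenna receiver with $B$ antennas, $U$ users with channel matrix $\mathbf{H}$, and a jammer with channel $\mathbf{j}$ and transmit signal $w$; minimizing the objective above is equivalent to minimizing $\mathbb{E}\|\mathbf{P}\mathbf{y}-(\mathbf{H}\mathbf{s}+\mathbf{n})\|^2$. $\|\cdot\|$ is the Euclidean norm and $(\cdot)^H$ the conjugate transpose. *)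

theory Defs
  imports "HOL-Probability.Probability"
begin

definition cinner :: "complex^'n \<Rightarrow> complex^'n \<Rightarrow> complex" where
  "cinner a y = (\<Sum>i\<in>UNIV. cnj (a $ i) * y $ i)"

definition cscg :: "'a measure \<Rightarrow> ('a \<Rightarrow> complex) \<Rightarrow> real \<Rightarrow> bool" where
  "cscg M X v \<longleftrightarrow> 0 < v \<and>
     distributed M lborel (\<lambda>x. Re (X x)) (normal_density 0 (sqrt (v / 2))) \<and>
     distributed M lborel (\<lambda>x. Im (X x)) (normal_density 0 (sqrt (v / 2))) \<and>
     prob_space.indep_var M borel (\<lambda>x. Re (X x)) borel (\<lambda>x. Im (X x))"

definition Cy :: "real \<Rightarrow> complex^'u^'b \<Rightarrow> real \<Rightarrow> complex^'b \<Rightarrow> real \<Rightarrow> complex^'b^'b" where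
  "Cy Es H EJ j N0 = (\<chi> i k. of_real Es * (\<Sum>u\<in>UNIV. H $ i $ u * cnj (H $ k $ u))
                          + of_real EJ * j $ i * cnj (j $ k)
                          + (if i = k then of_real N0 else 0))"

definition rx :: "complex^'u^'b \<Rightarrow> complex^'u \<Rightarrow> complex^'b \<Rightarrow> complex \<Rightarrow> complex^'b \<Rightarrow> complex^'b" where
  "rx H s j w n = H *v s + w *s j + n"

definition objective :: "'a measure \<Rightarrow> complex^'u^'b \<Rightarrow> complex^'b \<Rightarrow> ('a \<Rightarrow> complex^'u)
    \<Rightarrow> ('a \<Rightarrow> complex) \<Rightarrow> ('a \<Rightarrow> complex^'b) \<Rightarrow> complex \<Rightarrow> complex^'b \<Rightarrow> complex^'b \<Rightarrow> real" where
  "objective M H j s w n \<beta> b a =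
     integral\<^sup>L M (\<lambda>x. (norm ((\<beta> * cinner a (rx H (s x) j (w x) (n x))) *s b - w x *s j))\<^sup>2)"

definition indep3 :: "'a measure \<Rightarrow> ('a \<Rightarrow> 'x::topological_space) \<Rightarrow> ('a \<Rightarrow> 'y::topological_space)
    \<Rightarrow> ('a \<Rightarrow> 'z::topological_space) \<Rightarrow> bool" where
  "indep3 M X Y Z \<longleftrightarrow>
     X \<in> borel_measurable M \<and> Y \<in> borel_measurable M \<and> Z \<in> borel_measurable M \<and>
     prob_space.indep_sets M
       (\<lambda>i::nat. if i = 0 then sigma_sets (space M) {X -` A \<inter> space M | A. A \<in> sets borel}
                 else if i = 1 then sigma_sets (space M) {Y -` A \<inter> space M | A. A \<in> sets borel}
                 else sigma_sets (space M) {Z -` A \<inter> space M | A. A \<in> sets borel})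
       {0, 1, 2}"

end

theory Submission
  imports Defs
begin


definition sqi :: "'a measure \<Rightarrow> ('a \<Rightarrow> complex) \<Rightarrow> bool" where
  "sqi M X \<longleftrightarrow> X \<in> borel_measurable M \<and> integrable M (\<lambda>x. X x * cnj (X x))"

lemma re_mult_cnj: "Re (z * cnj z) = (cmod z)\<^sup>2"
  by (simp only: complex_mult_cnj Re_complex_of_real cmod_power2)

lemma mult_cnj_of_real: "z * cnj z = complex_of_real ((cmod z)\<^sup>2)"
  by (simp only: complex_mult_cnj cmod_power2)

definition ip :: "'a measure \<Rightarrow> ('a \<Rightarrow> complex) \<Rightarrow> ('a \<Rightarrow> complex) \<Rightarrow> complex" where
  "ip M X Y = integral\<^sup>L M (\<lambda>x. X x * cnj (Y x))"

lemma meas_cnj[measurable (raw)]: "Y \<in> borel_measurable M \<Longrightarrow> (\<lambda>x. cnj (Y x)) \<in> borel_measurable M"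
  by (auto simp: borel_measurable_complex_iff)

lemma sqi_meas: "sqi M X \<Longrightarrow> X \<in> borel_measurable M"
  by (simp add: sqi_def)

lemma sqi_prod:
  assumes "sqi M X" "sqi M Y"
  shows "integrable M (\<lambda>x. X x * cnj (Y x))"
proof (rule Bochner_Integration.integrable_bound)
  have h1: "integrable M (\<lambda>x. Re (X x * cnj (X x)))"
    by (rule integrable_Re) (use assms in \<open>simp add: sqi_def\<close>)
  have h2: "integrable M (\<lambda>x. Re (Y x * cnj (Y x)))"
    by (rule integrable_Re) (use assms in \<open>simp add: sqi_def\<close>)
  show "integrable M (\<lambda>x. Re (X x * cnj (X x)) + Re (Y x * cnj (Y x)))" by (rule Bochner_Integration.integrable_add[OF h1 h2])
  show "(\<lambda>x. X x * cnj (Y x)) \<in> borel_measurable M"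
    using assms unfolding sqi_def by (intro borel_measurable_times meas_cnj) auto
  show "AE x in M. norm (X x * cnj (Y x)) \<le> norm (Re (X x * cnj (X x)) + Re (Y x * cnj (Y x)))"
  proof (rule AE_I2)
    fix x
    have e1: "Re (X x * cnj (X x)) = (cmod (X x))\<^sup>2" by (rule re_mult_cnj)
    have e2: "Re (Y x * cnj (Y x)) = (cmod (Y x))\<^sup>2" by (rule re_mult_cnj)
    have "cmod (X x) * cmod (Y x) \<le> (cmod (X x))\<^sup>2 + (cmod (Y x))\<^sup>2"
      by (smt (verit) norm_ge_zero power2_eq_square mult_mono mult_nonneg_nonneg)
    then show "norm (X x * cnj (Y x)) \<le> norm (Re (X x * cnj (X x)) + Re (Y x * cnj (Y x)))"
      unfolding e1 e2 by (simp add: norm_mult)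
  qed
qed

lemma sqi_add: "sqi M X \<Longrightarrow> sqi M Y \<Longrightarrow> sqi M (\<lambda>x. X x + Y x)"
proof -
  assume a: "sqi M X" "sqi M Y"
  have "integrable M (\<lambda>x. X x * cnj (X x) + X x * cnj (Y x) + (Y x * cnj (X x) + Y x * cnj (Y x)))"
    using sqi_prod[OF a(1) a(1)] sqi_prod[OF a(1) a(2)] sqi_prod[OF a(2) a(1)] sqi_prod[OF a(2) a(2)]
    by auto
  moreover have "(\<lambda>x. (X x + Y x) * cnj (X x + Y x)) = (\<lambda>x. X x * cnj (X x) + X x * cnj (Y x) + (Y x * cnj (X x) + Y x * cnj (Y x)))"
    by (auto simp: algebra_simps)
  ultimately show ?thesis using a by (auto simp: sqi_def)
qed

lemma sqi_scale: "sqi M X \<Longrightarrow> sqi M (\<lambda>x. c * X x)"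
proof -
  assume a: "sqi M X"
  have "(\<lambda>x. (c * X x) * cnj (c * X x)) = (\<lambda>x. (c * cnj c) * (X x * cnj (X x)))"
    by (auto simp: algebra_simps)
  then show ?thesis using a by (auto simp: sqi_def)
qed

lemma sqi_zero: "sqi M (\<lambda>x. 0)"
  by (simp add: sqi_def)

lemma sqi_sum: "finite I \<Longrightarrow> (\<And>i. i \<in> I \<Longrightarrow> sqi M (X i)) \<Longrightarrow> sqi M (\<lambda>x. \<Sum>i\<in>I. X i x)"
proof (induction I rule: finite_induct)
  case empty then show ?case by (simp add: sqi_zero)
next
  case (insert i I)
  then show ?case using sqi_add[of M "X i" "\<lambda>x. \<Sum>i\<in>I. X i x"] by simp
qed

lemma ip_add1: "sqi M X \<Longrightarrow> sqi M Y \<Longrightarrow> sqi M Z \<Longrightarrow> ip M (\<lambda>x. X x + Y x) Z = ip M X Z + ip M Y Z"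
  unfolding ip_def by (simp add: distrib_right sqi_prod)

lemma ip_scale1: "ip M (\<lambda>x. c * X x) Z = c * ip M X Z"
  unfolding ip_def by (simp add: mult.assoc)

lemma ip_cnj: "ip M Y X = cnj (ip M X Y)"
  unfolding ip_def Bochner_Integration.integral_cnj[symmetric] by (simp add: mult.commute)

lemma ip_add2: "sqi M X \<Longrightarrow> sqi M Y \<Longrightarrow> sqi M Z \<Longrightarrow> ip M Z (\<lambda>x. X x + Y x) = ip M Z X + ip M Z Y"
  by (subst (1 2 3) ip_cnj) (simp add: ip_add1)

lemma ip_scale2: "ip M Z (\<lambda>x. c * X x) = cnj c * ip M Z X"
  by (subst (1 2) ip_cnj) (simp add: ip_scale1)

lemma ip_sum1: "finite I \<Longrightarrow> (\<And>i. i \<in> I \<Longrightarrow> sqi M (X i)) \<Longrightarrow> sqi M Z \<Longrightarrow>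
   ip M (\<lambda>x. \<Sum>i\<in>I. X i x) Z = (\<Sum>i\<in>I. ip M (X i) Z)"
  unfolding ip_def by (simp add: sum_distrib_right sqi_prod)

lemma ip_sum2: "finite I \<Longrightarrow> (\<And>i. i \<in> I \<Longrightarrow> sqi M (X i)) \<Longrightarrow> sqi M Z \<Longrightarrow>
   ip M Z (\<lambda>x. \<Sum>i\<in>I. X i x) = (\<Sum>i\<in>I. ip M Z (X i))"
  by (subst ip_cnj) (simp add: ip_sum1 ip_cnj[of M Z])

lemma ip_self: "sqi M X \<Longrightarrow> ip M X X = of_real (integral\<^sup>L M (\<lambda>x. (cmod (X x))\<^sup>2))"
proof -
  have "(\<lambda>x. X x * cnj (X x)) = (\<lambda>x. complex_of_real ((cmod (X x))\<^sup>2))"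
    by (simp only: mult_cnj_of_real)
  then show ?thesis unfolding ip_def by (simp only: integral_complex_of_real)
qed

lemma ip_self_Re: "sqi M X \<Longrightarrow> 0 \<le> Re (ip M X X)"
  by (simp add: ip_self)

lemma sqi_sq_int: "sqi M X \<Longrightarrow> integrable M (\<lambda>x. (cmod (X x))\<^sup>2)"
proof -
  assume a: "sqi M X"
  have "(\<lambda>x. (cmod (X x))\<^sup>2) = (\<lambda>x. Re (X x * cnj (X x)))"
    by (simp only: re_mult_cnj)
  then show ?thesis using a integrable_Re[of M "\<lambda>x. X x * cnj (X x)"] by (simp add: sqi_def del: integrable_Re)
qed



context prob_space begin

lemma normal0_facts:
  assumes D: "distributed M lborel X (normal_density 0 \<sigma>)" and sp: "0 < \<sigma>"
  shows "integrable M X" "integral\<^sup>L M X = 0" "integrable M (\<lambda>x. (X x)\<^sup>2)"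
    "integral\<^sup>L M (\<lambda>x. (X x)\<^sup>2) = \<sigma>\<^sup>2"
proof -
  have "integrable lborel (\<lambda>x. normal_density 0 \<sigma> x * x)" by (rule integrable_normal_moment_nz_1[OF sp])
  then show i1: "integrable M X"
    by (subst distributed_integrable[OF D, of "\<lambda>x. x", symmetric]) auto
  show e1: "integral\<^sup>L M X = 0"
    using normal_distributed_expectation[OF sp D] .
  have "integrable lborel (\<lambda>x. normal_density 0 \<sigma> x * (x - 0)^2)" by (rule integrable_normal_moment[OF sp])
  then show "integrable M (\<lambda>x. (X x)\<^sup>2)"
    by (subst distributed_integrable[OF D, of "\<lambda>x. x\<^sup>2", symmetric]) auto
  show "integral\<^sup>L M (\<lambda>x. (X x)\<^sup>2) = \<sigma>\<^sup>2"
    using normal_distributed_variance[OF sp D] e1 by simp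
qed

lemma cscg_facts:
  assumes "cscg M W v"
  shows "sqi M W" "integrable M W" "integral\<^sup>L M W = 0" "ip M W W = of_real v" "W \<in> borel_measurable M"
proof -
  have v: "0 < v" and DR: "distributed M lborel (\<lambda>x. Re (W x)) (normal_density 0 (sqrt (v / 2)))"
    and DI: "distributed M lborel (\<lambda>x. Im (W x)) (normal_density 0 (sqrt (v / 2)))"
    using assms by (auto simp: cscg_def)
  have sp: "0 < sqrt (v/2)" using v by simp
  note R = normal0_facts[OF DR sp] and I = normal0_facts[OF DI sp]
  have mR: "(\<lambda>x. Re (W x)) \<in> borel_measurable M" using R(1) by auto
  have mI: "(\<lambda>x. Im (W x)) \<in> borel_measurable M" using I(1) by auto
  show mW: "W \<in> borel_measurable M" using mR mI by (simp add: borel_measurable_complex_iff)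
  have Weq: "W = (\<lambda>x. complex_of_real (Re (W x)) + \<i> * complex_of_real (Im (W x)))"
    by (rule ext) (simp add: complex_eq_iff)
  have iW: "integrable M (\<lambda>x. complex_of_real (Re (W x)) + \<i> * complex_of_real (Im (W x)))"
    using R(1) I(1) by auto
  then show "integrable M W" using Weq by metis
  have "integral\<^sup>L M (\<lambda>x. complex_of_real (Re (W x)) + \<i> * complex_of_real (Im (W x))) = 0"
    using R(1,2) I(1,2) by (simp add: Bochner_Integration.integral_add)
  then show "integral\<^sup>L M W = 0" using Weq by metis
  have sq: "(\<lambda>x. W x * cnj (W x)) = (\<lambda>x. complex_of_real ((Re (W x))\<^sup>2 + (Im (W x))\<^sup>2))"
    by (simp add: complex_mult_cnj)
  have "integrable M (\<lambda>x. (Re (W x))\<^sup>2 + (Im (W x))\<^sup>2)" using R(3) I(3) by auto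
  then have "integrable M (\<lambda>x. complex_of_real ((Re (W x))\<^sup>2 + (Im (W x))\<^sup>2))"
    by (rule integrable_of_real)
  then show "sqi M W" unfolding sqi_def sq using mW by blast
  have "integral\<^sup>L M (\<lambda>x. (Re (W x))\<^sup>2 + (Im (W x))\<^sup>2) = v"
    using R(3,4) I(3,4) v by (simp add: Bochner_Integration.integral_add)
  then show "ip M W W = of_real v" unfolding ip_def sq by (simp only: integral_complex_of_real)
qed

lemma indep_ip_zero:
  assumes "indep_var borel X borel Y" "integrable M X" "integrable M Y" "integral\<^sup>L M Y = 0"
  shows "ip M X Y = 0"
proof -
  have cm: "cnj \<in> borel_measurable (borel :: complex measure)"
    by (intro meas_cnj) simp
  have "indep_var borel (id \<circ> X) borel (cnj \<circ> Y)"
    by (rule indep_var_compose[OF assms(1)]) (auto simp: cm)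
  then have ind: "indep_var borel X borel (\<lambda>x. cnj (Y x))" by (simp add: comp_def)
  have "integrable M (\<lambda>x. cnj (Y x))" using assms(3) by simp
  then show ?thesis unfolding ip_def
    using indep_var_lebesgue_integral[OF ind assms(2)] assms(4) by simp
qed

lemma indep_ip_zero':
  assumes "indep_var borel X borel Y" "integrable M X" "integrable M Y" "integral\<^sup>L M X = 0"
  shows "ip M X Y = 0"
proof -
  have cm: "cnj \<in> borel_measurable (borel :: complex measure)"
    by (intro meas_cnj) simp
  have "indep_var borel (id \<circ> X) borel (cnj \<circ> Y)"
    by (rule indep_var_compose[OF assms(1)]) (auto simp: cm)
  then have ind: "indep_var borel X borel (\<lambda>x. cnj (Y x))" by (simp add: comp_def)
  have "integrable M (\<lambda>x. cnj (Y x))" using assms(3) by simp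
  then show ?thesis unfolding ip_def
    using indep_var_lebesgue_integral[OF ind assms(2)] assms(4) by simp
qed

lemma indep_var_from_set:
  fixes X' Y' :: "'a \<Rightarrow> complex"
  assumes "indep_set A B"
    "sigma_sets (space M) {X' -` S \<inter> space M | S. S \<in> sets borel} \<subseteq> A"
    "sigma_sets (space M) {Y' -` S \<inter> space M | S. S \<in> sets borel} \<subseteq> B"
    "X' \<in> borel_measurable M" "Y' \<in> borel_measurable M"
  shows "indep_var borel X' borel Y'"
proof -
  have h: "A \<subseteq> events" "B \<subseteq> events" "\<forall>a\<in>A. \<forall>b\<in>B. prob (a \<inter> b) = prob a * prob b"
    using assms(1) unfolding indep_sets2_eq by auto
  have "indep_set (sigma_sets (space M) {X' -` S \<inter> space M | S. S \<in> sets borel})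
                  (sigma_sets (space M) {Y' -` S \<inter> space M | S. S \<in> sets borel})"
    unfolding indep_sets2_eq
  proof (intro conjI)
    show "sigma_sets (space M) {X' -` S \<inter> space M | S. S \<in> sets borel} \<subseteq> events"
      using assms(2) h(1) by (rule order.trans)
    show "sigma_sets (space M) {Y' -` S \<inter> space M | S. S \<in> sets borel} \<subseteq> events"
      using assms(3) h(2) by (rule order.trans)
    show "\<forall>a\<in>sigma_sets (space M) {X' -` S \<inter> space M | S. S \<in> sets borel}.
       \<forall>b\<in>sigma_sets (space M) {Y' -` S \<inter> space M | S. S \<in> sets borel}. prob (a \<inter> b) = prob a * prob b"
      using h(3) assms(2,3) by blast
  qed
  then show ?thesis unfolding indep_var_eq using assms(4,5) by simp
qed

lemma sig_sub:
  fixes f :: "'x::topological_space \<Rightarrow> 'y::topological_space"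
  assumes f: "f \<in> borel_measurable borel"
  shows "sigma_sets (space M) {(\<lambda>x. f (X x)) -` A \<inter> space M | A. A \<in> sets borel}
     \<subseteq> sigma_sets (space M) {X -` A \<inter> space M | A. A \<in> sets borel}"
proof (rule sigma_sets_mono)
  show "{(\<lambda>x. f (X x)) -` A \<inter> space M | A. A \<in> sets borel}
     \<subseteq> sigma_sets (space M) {X -` A \<inter> space M | A. A \<in> sets borel}"
  proof
    fix C assume "C \<in> {(\<lambda>x. f (X x)) -` A \<inter> space M | A. A \<in> sets borel}"
    then obtain A where A: "A \<in> sets borel" "C = (\<lambda>x. f (X x)) -` A \<inter> space M" by auto
    have "f -` A \<in> sets borel" using measurable_sets[OF f A(1)] by simp
    moreover have "C = X -` (f -` A) \<inter> space M" using A by auto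
    ultimately show "C \<in> sigma_sets (space M) {X -` A \<inter> space M | A. A \<in> sets borel}"
      by (auto intro: sigma_sets.Basic)
  qed
qed

lemma indep3_sets:
  fixes X :: "'a \<Rightarrow> 'x::topological_space" and Y :: "'a \<Rightarrow> 'y::topological_space"
    and Z :: "'a \<Rightarrow> 'z::topological_space"
  assumes "indep3 M X Y Z"
  shows "indep_set (sigma_sets (space M) {X -` A \<inter> space M | A. A \<in> sets borel})
                   (sigma_sets (space M) {Y -` A \<inter> space M | A. A \<in> sets borel})"
    "indep_set (sigma_sets (space M) {X -` A \<inter> space M | A. A \<in> sets borel})
                   (sigma_sets (space M) {Z -` A \<inter> space M | A. A \<in> sets borel})"
    "indep_set (sigma_sets (space M) {Y -` A \<inter> space M | A. A \<in> sets borel})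
                   (sigma_sets (space M) {Z -` A \<inter> space M | A. A \<in> sets borel})"
    "X \<in> borel_measurable M" "Y \<in> borel_measurable M" "Z \<in> borel_measurable M"
proof -
  define F where "F = (\<lambda>i::nat. if i = 0 then sigma_sets (space M) {X -` A \<inter> space M | A. A \<in> sets borel}
                 else if i = 1 then sigma_sets (space M) {Y -` A \<inter> space M | A. A \<in> sets borel}
                 else sigma_sets (space M) {Z -` A \<inter> space M | A. A \<in> sets borel})"
  have ind: "indep_sets F {0, 1, 2}"
    using assms by (auto simp: indep3_def F_def)
  show "X \<in> borel_measurable M" "Y \<in> borel_measurable M" "Z \<in> borel_measurable M"
    using assms by (auto simp: indep3_def)
  have ev: "F i \<subseteq> events" if "i \<in> {0,1,2}" for i
    using ind that unfolding indep_sets_def by blast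
  have pr: "prob (a \<inter> b) = prob a * prob b" if "p \<in> {0,1,2}" "q \<in> {0,1,2}" "p \<noteq> q"
    "a \<in> F p" "b \<in> F q" for p q a b
  proof -
    have "prob (\<Inter>k\<in>{p,q}. (\<lambda>k. if k = p then a else b) k) = (\<Prod>k\<in>{p,q}. prob ((\<lambda>k. if k = p then a else b) k))"
      by (rule indep_setsD[OF ind]) (use that in auto)
    then show ?thesis using that by (simp add: Int_commute)
  qed
  have F0: "F 0 = sigma_sets (space M) {X -` A \<inter> space M | A. A \<in> sets borel}"
    and F1: "F 1 = sigma_sets (space M) {Y -` A \<inter> space M | A. A \<in> sets borel}"
    and F2: "F 2 = sigma_sets (space M) {Z -` A \<inter> space M | A. A \<in> sets borel}"
    by (auto simp: F_def)
  show "indep_set (sigma_sets (space M) {X -` A \<inter> space M | A. A \<in> sets borel})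
                   (sigma_sets (space M) {Y -` A \<inter> space M | A. A \<in> sets borel})"
    unfolding indep_sets2_eq F0[symmetric] F1[symmetric] using ev[of 0] ev[of 1] pr[of 0 1] by auto
  show "indep_set (sigma_sets (space M) {X -` A \<inter> space M | A. A \<in> sets borel})
                   (sigma_sets (space M) {Z -` A \<inter> space M | A. A \<in> sets borel})"
    unfolding indep_sets2_eq F0[symmetric] F2[symmetric] using ev[of 0] ev[of 2] pr[of 0 2] by auto
  show "indep_set (sigma_sets (space M) {Y -` A \<inter> space M | A. A \<in> sets borel})
                   (sigma_sets (space M) {Z -` A \<inter> space M | A. A \<in> sets borel})"
    unfolding indep_sets2_eq F1[symmetric] F2[symmetric] using ev[of 1] ev[of 2] pr[of 1 2] by auto
qed

end


lemma pt: fixes H :: "complex^'u^'b" and j a :: "complex^'b" shows "cnj (a$i) * (of_real Es * (\<Sum>u\<in>UNIV. H $ i $ u * cnj (H $ k $ u)) + of_real EJ * j $ i * cnj (j $ k)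
        + (if i = k then of_real N0 else 0)) * a$k =
       of_real Es * (\<Sum>u\<in>UNIV. cnj (a$i) * H $ i $ u * (a$k * cnj (H $ k $ u)))
       + of_real EJ * ((cnj (a$i) * j $ i) * (a$k * cnj (j $ k)))
       + cnj (a$i) * (if i = k then of_real N0 else 0) * a$k"
  by (simp add: distrib_left distrib_right sum_distrib_left sum_distrib_right mult_ac)
lemma st2: fixes H :: "complex^'u^'b" and j a :: "complex^'b" shows "(\<Sum>i\<in>UNIV. \<Sum>k\<in>UNIV. cnj (a$i) *
       (of_real Es * (\<Sum>u\<in>UNIV. H $ i $ u * cnj (H $ k $ u)) + of_real EJ * j $ i * cnj (j $ k)
        + (if i = k then of_real N0 else 0)) * a$k) = (\<Sum>i\<in>UNIV. \<Sum>k\<in>UNIV. of_real Es * (\<Sum>u\<in>UNIV. cnj (a$i) * H $ i $ u * (a$k * cnj (H $ k $ u))))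
      + (\<Sum>i\<in>UNIV. \<Sum>k\<in>UNIV. of_real EJ * ((cnj (a$i) * j $ i) * (a$k * cnj (j $ k))))
      + (\<Sum>i\<in>UNIV. \<Sum>k\<in>UNIV. cnj (a$i) * (if i = k then of_real N0 else 0) * a$k)"
  unfolding pt sum.distrib by (rule refl)
lemma st5: fixes a :: "complex^'b" shows "(\<Sum>i\<in>UNIV. \<Sum>k\<in>UNIV. cnj (a$i) * (if i = k then of_real N0 else 0) * a$k)
     = of_real N0 * (\<Sum>i\<in>UNIV. cnj (a$i) * a$i)"
  proof -
    have e: "cnj (a$i) * (if i = k then of_real N0 else 0) * a$k = (if i = k then of_real N0 * (cnj (a$i) * a$k) else 0)" for i k
      by simp
    show ?thesis unfolding e by (simp add: sum_distrib_left)
  qed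
lemma st3: fixes H :: "complex^'u^'b" and j a :: "complex^'b" shows "(\<Sum>i\<in>UNIV. \<Sum>k\<in>UNIV. of_real Es * (\<Sum>u\<in>UNIV. cnj (a$i) * H $ i $ u * (a$k * cnj (H $ k $ u))))
     = of_real Es * (\<Sum>u\<in>UNIV. (\<Sum>i\<in>UNIV. cnj (a$i) * H$i$u) * cnj (\<Sum>i\<in>UNIV. cnj (a$i) * H$i$u))"
  proof -
    define g where "g i k u = cnj (a$i) * H $ i $ u * (a$k * cnj (H $ k $ u))" for i k u
    have r: "(\<Sum>i\<in>UNIV. cnj (a$i) * H$i$u) * cnj (\<Sum>i\<in>UNIV. cnj (a$i) * H$i$u) = (\<Sum>i\<in>UNIV. \<Sum>k\<in>UNIV. g i k u)" for u
      unfolding g_def by (simp add: sum_product cnj_sum)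
    have s1: "(\<Sum>i\<in>UNIV. \<Sum>k\<in>UNIV. \<Sum>u\<in>UNIV. g i k u) = (\<Sum>i\<in>UNIV. \<Sum>u\<in>UNIV. \<Sum>k\<in>UNIV. g i k u)"
      by (rule sum.cong[OF refl]) (rule sum.swap)
    have s2: "(\<Sum>i\<in>UNIV. \<Sum>u\<in>UNIV. \<Sum>k\<in>UNIV. g i k u) = (\<Sum>u\<in>UNIV. \<Sum>i\<in>UNIV. \<Sum>k\<in>UNIV. g i k u)"
      by (rule sum.swap)
    have "(\<Sum>i\<in>UNIV. \<Sum>k\<in>UNIV. of_real Es * (\<Sum>u\<in>UNIV. g i k u)) = of_real Es * (\<Sum>i\<in>UNIV. \<Sum>k\<in>UNIV. \<Sum>u\<in>UNIV. g i k u)"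
      by (simp only: sum_distrib_left)
    also have "\<dots> = of_real Es * (\<Sum>u\<in>UNIV. (\<Sum>i\<in>UNIV. cnj (a$i) * H$i$u) * cnj (\<Sum>i\<in>UNIV. cnj (a$i) * H$i$u))"
      unfolding r s1 s2 by (rule refl)
    finally show ?thesis unfolding g_def .
  qed
lemma st4: fixes H :: "complex^'u^'b" and j a :: "complex^'b" shows "(\<Sum>i\<in>UNIV. \<Sum>k\<in>UNIV. of_real EJ * ((cnj (a$i) * j $ i) * (a$k * cnj (j $ k))))
     = of_real EJ * (cinner a j * cnj (cinner a j))"
  proof -
    have c: "cnj (cinner a j) = (\<Sum>k\<in>UNIV. a$k * cnj (j$k))" by (simp add: cinner_def cnj_sum)
    have d: "cinner a j = (\<Sum>i\<in>UNIV. cnj (a$i) * j$i)" by (simp add: cinner_def)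
    show ?thesis unfolding c unfolding d by (subst sum_product) (simp only: sum_distrib_left)
  qed

lemma st1:
  fixes H :: "complex^'u^'b" and j a :: "complex^'b"
  shows "cinner a (Cy Es H EJ j N0 *v a) = (\<Sum>i\<in>UNIV. \<Sum>k\<in>UNIV. cnj (a$i) *
       (of_real Es * (\<Sum>u\<in>UNIV. H $ i $ u * cnj (H $ k $ u)) + of_real EJ * j $ i * cnj (j $ k)
        + (if i = k then of_real N0 else 0)) * a$k)"
  unfolding cinner_def Cy_def matrix_vector_mult_def
  by (simp only: vec_lambda_beta sum_distrib_left mult.assoc)

lemma cy_expand:
  fixes H :: "complex^'u^'b" and j a :: "complex^'b"
  shows "cinner a (Cy Es H EJ j N0 *v a) =
    of_real Es * (\<Sum>u\<in>UNIV. (\<Sum>i\<in>UNIV. cnj (a$i) * H$i$u) * cnj (\<Sum>i\<in>UNIV. cnj (a$i) * H$i$u))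
    + of_real EJ * (cinner a j * cnj (cinner a j)) + of_real N0 * (\<Sum>i\<in>UNIV. cnj (a$i) * a$i)"
  unfolding st1 st2 st3 st4 st5 by (rule refl)



lemma ip3:
  assumes "sqi M A" "sqi M B" "sqi M C" "ip M A B = 0" "ip M A C = 0" "ip M B C = 0" "sqi M D"
  shows "ip M (\<lambda>x. A x + B x + C x) (\<lambda>x. A x + B x + C x) = ip M A A + ip M B B + ip M C C"
    "ip M (\<lambda>x. A x + B x + C x) D = ip M A D + ip M B D + ip M C D"
proof -
  have s1: "sqi M (\<lambda>x. A x + B x)" using assms by (simp add: sqi_add)
  have s2: "sqi M (\<lambda>x. A x + B x + C x)" using s1 assms by (simp add: sqi_add)
  have c: "ip M B A = 0" "ip M C A = 0" "ip M C B = 0"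
    using assms(4-6) by (simp_all add: ip_cnj[of M _ A] ip_cnj[of M C B])
  show "ip M (\<lambda>x. A x + B x + C x) D = ip M A D + ip M B D + ip M C D"
    using assms s1 by (simp add: ip_add1)
  show "ip M (\<lambda>x. A x + B x + C x) (\<lambda>x. A x + B x + C x) = ip M A A + ip M B B + ip M C C"
    using assms s1 s2 c by (simp add: ip_add1 ip_add2)
qed

lemma ip2lin:
  assumes "sqi M Z" "sqi M W"
  shows "ip M (\<lambda>x. c * Z x + d * W x) (\<lambda>x. c * Z x + d * W x) =
     c * cnj c * ip M Z Z + c * cnj d * ip M Z W + d * cnj c * cnj (ip M Z W) + d * cnj d * ip M W W"
proof -
  have "sqi M (\<lambda>x. c * Z x)" "sqi M (\<lambda>x. d * W x)" "sqi M (\<lambda>x. c * Z x + d * W x)"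
    using assms by (auto intro: sqi_scale sqi_add)
  then show ?thesis using assms
    by (simp add: ip_add1 ip_add2 ip_scale1 ip_scale2 ip_cnj[of M W Z] algebra_simps)
qed

lemma proj_meas: "(\<lambda>v::'c::topological_space^'n. v $ i) \<in> borel_measurable borel"
  by (intro borel_measurable_continuous_onI continuous_on_component continuous_on_id)

lemma moments:
  fixes M :: "'s measure"
    and H :: "complex^'u^'b" and j :: "complex^'b"
    and s :: "'s \<Rightarrow> complex^'u" and w :: "'s \<Rightarrow> complex" and n :: "'s \<Rightarrow> complex^'b"
    and Es EJ N0 :: real and a :: "complex^'b"
  assumes P: "prob_space M"
    and s_mean: "\<And>i. integrable M (\<lambda>x. s x $ i) \<and> integral\<^sup>L M (\<lambda>x. s x $ i) = 0"
    and s_cov: "\<And>i k. integrable M (\<lambda>x. s x $ i * cnj (s x $ k)) \<and>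
                  integral\<^sup>L M (\<lambda>x. s x $ i * cnj (s x $ k)) = (if i = k then of_real Es else 0)"
    and w_gauss: "cscg M w EJ"
    and n_indep: "prob_space.indep_vars M (\<lambda>_. borel) (\<lambda>i x. n x $ i) UNIV"
    and n_gauss: "\<And>i. cscg M (\<lambda>x. n x $ i) N0"
    and indep_swn: "indep3 M s w n"
  defines "z \<equiv> (\<lambda>x. cinner a (rx H (s x) j (w x) (n x)))"
  shows "sqi M z" "sqi M w" "ip M z z = of_real (Re (cinner a (Cy Es H EJ j N0 *v a)))"
    "cinner a (Cy Es H EJ j N0 *v a) = of_real (Re (cinner a (Cy Es H EJ j N0 *v a)))"
    "ip M z w = of_real EJ * cinner a j" "ip M w w = of_real EJ"
    "EJ * (cmod (cinner a j))\<^sup>2 \<le> Re (cinner a (Cy Es H EJ j N0 *v a))" "0 < EJ"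
proof -
  interpret prob_space M by (rule P)
  define su where "su u = (\<lambda>x. s x $ u)" for u
  define nn where "nn i = (\<lambda>x. n x $ i)" for i
  note W = cscg_facts[OF w_gauss]
  note NF = cscg_facts[OF n_gauss]
  show EJp: "0 < EJ" using w_gauss by (simp add: cscg_def)
  have sq_su: "sqi M (su u)" for u
    using s_cov[of u u] s_mean[of u] unfolding sqi_def su_def by auto
  have ip_su: "ip M (su u) (su v) = (if u = v then of_real Es else 0)" for u v
    using s_cov[of u v] unfolding ip_def su_def by auto
  have sq_nn: "sqi M (nn i)" for i using NF(1) unfolding nn_def .
  have int_nn: "integrable M (nn i)" "integral\<^sup>L M (nn i) = 0" for i
    using NF(2,3) unfolding nn_def by auto
  have int_su: "integrable M (su u)" "integral\<^sup>L M (su u) = 0" for u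
    using s_mean unfolding su_def by auto
  have ip_nn: "ip M (nn i) (nn k) = (if i = k then of_real N0 else 0)" for i k
  proof (cases "i = k")
    case True then show ?thesis using NF(4) unfolding nn_def by simp
  next
    case False
    define G where "G l = (\<lambda>x. (if l = i then id else cnj) (n x $ l))" for l
    have "indep_vars (\<lambda>_. borel) (\<lambda>l x. (if l = i then id else cnj) (n x $ l)) UNIV"
      by (rule indep_vars_compose2[OF n_indep]) (auto intro: meas_cnj)
    then have iv: "indep_vars (\<lambda>_. borel) G {i, k}"
      unfolding G_def by (rule indep_vars_subset) auto
    have ig: "integrable M (G l)" for l
      using int_nn(1)[of l] unfolding G_def nn_def by auto
    have "integral\<^sup>L M (\<lambda>x. \<Prod>l\<in>{i,k}. G l x) = (\<Prod>l\<in>{i,k}. integral\<^sup>L M (G l))"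
      by (rule indep_vars_lebesgue_integral[OF _ iv ig]) auto
    moreover have "(\<lambda>x. \<Prod>l\<in>{i,k}. G l x) = (\<lambda>x. nn i x * cnj (nn k x))"
      using False unfolding G_def nn_def by auto
    moreover have "integral\<^sup>L M (G i) = 0"
      using int_nn[of i] unfolding G_def nn_def by simp
    ultimately show ?thesis using False unfolding ip_def by simp
  qed
  note I3 = indep3_sets[OF indep_swn]
  have ind_sw: "indep_var borel (su u) borel w" for u
    unfolding su_def
    by (rule indep_var_from_set[OF I3(1) sig_sub[OF proj_meas]])
       (use W(5) I3(4) in \<open>auto intro: measurable_compose[OF _ proj_meas]\<close>)
  have ind_sn: "indep_var borel (su u) borel (nn k)" for u k
    unfolding su_def nn_def
    by (rule indep_var_from_set[OF I3(2) sig_sub[OF proj_meas] sig_sub[OF proj_meas]])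
       (use I3(4,6) in \<open>auto intro: measurable_compose[OF _ proj_meas]\<close>)
  have ind_wn: "indep_var borel w borel (nn k)" for k
    unfolding nn_def
    by (rule indep_var_from_set[OF I3(3) _ sig_sub[OF proj_meas]])
       (use W(5) I3(6) in \<open>auto intro: measurable_compose[OF _ proj_meas]\<close>)
  have ip_sw: "ip M (su u) w = 0" for u
    by (rule indep_ip_zero[OF ind_sw int_su(1) W(2,3)])
  have ip_sn: "ip M (su u) (nn k) = 0" for u k
    by (rule indep_ip_zero[OF ind_sn int_su(1) int_nn])
  have ip_wn: "ip M w (nn k) = 0" for k
    by (rule indep_ip_zero[OF ind_wn W(2) int_nn])
  show sqw: "sqi M w" and ipww: "ip M w w = of_real EJ" using W by auto
  define h where "h u = (\<Sum>i\<in>UNIV. cnj (a$i) * H$i$u)" for u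
  define S where "S = (\<lambda>x. \<Sum>u\<in>UNIV. h u * su u x)"
  define Nn where "Nn = (\<lambda>x. \<Sum>i\<in>UNIV. cnj (a$i) * nn i x)"
  define \<alpha> where "\<alpha> = cinner a j"
  define Wa where "Wa = (\<lambda>x. \<alpha> * w x)"
  have zeq: "z = (\<lambda>x. S x + Wa x + Nn x)"
  proof (rule ext)
    fix x
    have "z x = (\<Sum>i\<in>UNIV. cnj (a$i) * ((\<Sum>u\<in>UNIV. H$i$u * s x $ u) + w x * j$i + n x $ i))"
      by (simp add: z_def cinner_def rx_def matrix_vector_mult_def)
    also have "\<dots> = (\<Sum>i\<in>UNIV. \<Sum>u\<in>UNIV. cnj (a$i) * H$i$u * s x $ u) + \<alpha> * w x + (\<Sum>i\<in>UNIV. cnj (a$i) * n x $ i)"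
      by (simp add: distrib_left sum.distrib sum_distrib_left \<alpha>_def cinner_def mult_ac)
    also have "(\<Sum>i\<in>UNIV. \<Sum>u\<in>UNIV. cnj (a$i) * H$i$u * s x $ u) = S x"
    proof -
      have "S x = (\<Sum>u\<in>UNIV. \<Sum>i\<in>UNIV. cnj (a$i) * H$i$u * s x $ u)"
        unfolding S_def h_def su_def by (simp only: sum_distrib_right)
      also have "\<dots> = (\<Sum>i\<in>UNIV. \<Sum>u\<in>UNIV. cnj (a$i) * H$i$u * s x $ u)"
        by (rule sum.swap)
      finally show ?thesis by (rule sym)
    qed
    finally show "z x = S x + Wa x + Nn x" by (simp add: Wa_def Nn_def nn_def)
  qed
  have sqS: "sqi M S" unfolding S_def by (intro sqi_sum sqi_scale sq_su) auto
  have sqN: "sqi M Nn" unfolding Nn_def by (intro sqi_sum sqi_scale sq_nn) auto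
  have sqW: "sqi M Wa" unfolding Wa_def by (intro sqi_scale sqw)
  have ipuS: "ip M (su u) S = cnj (h u) * of_real Es" for u
  proof -
    have "ip M (su u) S = (\<Sum>v\<in>UNIV. cnj (h v) * ip M (su u) (su v))"
      unfolding S_def by (simp add: ip_sum2 ip_scale2 sqi_scale sq_su)
    also have "\<dots> = (\<Sum>v\<in>UNIV. if u = v then cnj (h v) * of_real Es else 0)"
      by (rule sum.cong) (auto simp: ip_su)
    finally show ?thesis by simp
  qed
  have ipSS: "ip M S S = of_real Es * (\<Sum>u\<in>UNIV. h u * cnj (h u))"
  proof -
    have e: "ip M (\<lambda>x. \<Sum>u\<in>UNIV. h u * su u x) S = (\<Sum>u\<in>UNIV. h u * ip M (su u) S)"
      by (simp add: ip_sum1 ip_scale1 sqi_scale sq_su sqS)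
    show ?thesis using e[folded S_def] by (simp add: ipuS sum_distrib_left mult_ac)
  qed
  have ipiN: "ip M (nn i) Nn = a$i * of_real N0" for i
  proof -
    have "ip M (nn i) Nn = (\<Sum>k\<in>UNIV. a$k * ip M (nn i) (nn k))"
      unfolding Nn_def by (simp add: ip_sum2 ip_scale2 sqi_scale sq_nn)
    also have "\<dots> = (\<Sum>k\<in>UNIV. if i = k then a$k * of_real N0 else 0)"
      by (rule sum.cong) (auto simp: ip_nn)
    finally show ?thesis by simp
  qed
  have ipNN: "ip M Nn Nn = of_real N0 * (\<Sum>i\<in>UNIV. cnj (a$i) * a$i)"
  proof -
    have e: "ip M (\<lambda>x. \<Sum>i\<in>UNIV. cnj (a$i) * nn i x) Nn = (\<Sum>i\<in>UNIV. cnj (a$i) * ip M (nn i) Nn)"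
      by (simp add: ip_sum1 ip_scale1 sqi_scale sq_nn sqN)
    show ?thesis using e[folded Nn_def] by (simp add: ipiN sum_distrib_left mult_ac)
  qed
  have ipSW: "ip M S Wa = 0"
    unfolding S_def Wa_def by (simp add: ip_sum1 ip_scale1 ip_scale2 sqi_scale sq_su sqw ip_sw)
  have ipSN: "ip M S Nn = 0"
    unfolding S_def Nn_def by (simp add: ip_sum1 ip_sum2 ip_scale1 ip_scale2 sqi_scale sq_su sq_nn sqi_sum ip_sn)
  have ipWN: "ip M Wa Nn = 0"
    unfolding Wa_def Nn_def by (simp add: ip_sum2 ip_scale1 ip_scale2 sqi_scale sq_nn ip_wn sqw)
  have ipWW: "ip M Wa Wa = \<alpha> * cnj \<alpha> * of_real EJ"
    unfolding Wa_def by (simp add: ip_scale1 ip_scale2 ipww)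
  have ipwN: "ip M w Nn = 0"
    unfolding Nn_def by (simp add: ip_sum2 ip_scale2 sqi_scale sq_nn ip_wn sqw)
  have ipNw: "ip M Nn w = 0" using ipwN ip_cnj[of M Nn w] by simp
  show sqz: "sqi M z" unfolding zeq using sqS sqW sqN by (intro sqi_add)
  have zz: "ip M z z = cinner a (Cy Es H EJ j N0 *v a)"
    unfolding zeq ip3(1)[OF sqS sqW sqN ipSW ipSN ipWN sqw] cy_expand ipSS ipWW ipNN
    by (simp add: h_def \<alpha>_def)
  have zr: "ip M z z = of_real (Re (ip M z z))" using ip_self[OF sqz] by simp
  show "ip M z z = of_real (Re (cinner a (Cy Es H EJ j N0 *v a)))" using zz zr by simp
  show "cinner a (Cy Es H EJ j N0 *v a) = of_real (Re (cinner a (Cy Es H EJ j N0 *v a)))" using zz zr by simp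
  show "ip M z w = of_real EJ * cinner a j"
    unfolding zeq ip3(2)[OF sqS sqW sqN ipSW ipSN ipWN sqw]
    using ipNw ip_cnj[of M w S] unfolding S_def Wa_def
    by (simp add: ip_sum1 ip_scale1 sqi_scale sq_su ip_sw ipww \<alpha>_def sqw)
  have "Re (ip M z z) = Re (ip M S S) + Re (ip M Wa Wa) + Re (ip M Nn Nn)"
    unfolding zeq ip3(1)[OF sqS sqW sqN ipSW ipSN ipWN sqw] by simp
  moreover have "Re (ip M Wa Wa) = EJ * (cmod \<alpha>)\<^sup>2"
    unfolding ipWW by (simp add: complex_mult_cnj cmod_power2)
  ultimately show "EJ * (cmod (cinner a j))\<^sup>2 \<le> Re (cinner a (Cy Es H EJ j N0 *v a))"
    using ip_self_Re[OF sqS] ip_self_Re[OF sqN] zz \<alpha>_def by simp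
qed



lemma alg1:
  fixes c d R :: complex and q e :: real
  shows "Re (c * cnj c * of_real q + c * cnj d * R + d * cnj c * cnj R + d * cnj d * of_real e)
     = (cmod c)\<^sup>2 * q + 2 * Re (c * cnj d * R) + (cmod d)\<^sup>2 * e"
proof -
  have "d * cnj c * cnj R = cnj (c * cnj d * R)" by simp
  moreover have "Re (c * cnj c * of_real q) = (cmod c)\<^sup>2 * q"
    by (simp only: mult_cnj_of_real of_real_mult[symmetric] Re_complex_of_real)
  moreover have "Re (d * cnj d * of_real e) = (cmod d)\<^sup>2 * e"
    by (simp only: mult_cnj_of_real of_real_mult[symmetric] Re_complex_of_real)
  ultimately show ?thesis by (simp add: cmod_power2 algebra_simps)
qed

lemma key1:
  fixes \<beta> c :: complex and B q X :: real
  assumes "0 \<le> B" "0 \<le> q" "B * q = 0 \<Longrightarrow> c = 0"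
  shows "X - (cmod c)\<^sup>2 / (B * q) \<le> (cmod \<beta>)\<^sup>2 * B * q - 2 * Re (\<beta> * c) + X"
proof (cases "B * q = 0")
  case True
  then show ?thesis using assms by simp
next
  case False
  define K where "K = B * q"
  have K: "0 < K" using False assms unfolding K_def by (simp add: less_le)
  have "0 \<le> (K * Re \<beta> - Re c)\<^sup>2 + (K * Im \<beta> + Im c)\<^sup>2" by simp
  then have "0 \<le> ((Re \<beta>)\<^sup>2 + (Im \<beta>)\<^sup>2) * K * K - 2 * (Re \<beta> * Re c - Im \<beta> * Im c) * K + ((Re c)\<^sup>2 + (Im c)\<^sup>2)"
    by (simp add: power2_eq_square algebra_simps)
  moreover
  { fix A Bb C :: real
    assume "0 \<le> A * K * K - 2 * Bb * K + C"
    then have "0 \<le> (A * K * K - 2 * Bb * K + C) / K" using K by simp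
    moreover have "(A * K * K - 2 * Bb * K + C) / K = A * K - 2 * Bb + C / K"
      using K by (simp add: field_simps)
    ultimately have "0 \<le> A * K - 2 * Bb + C / K" by simp }
  ultimately have "0 \<le> ((Re \<beta>)\<^sup>2 + (Im \<beta>)\<^sup>2) * K - 2 * (Re \<beta> * Re c - Im \<beta> * Im c) + ((Re c)\<^sup>2 + (Im c)\<^sup>2) / K"
    by blast
  then show ?thesis unfolding K_def[symmetric]
    by (simp add: cmod_power2 K_def algebra_simps)
qed

lemma key2:
  fixes c :: complex and B q X :: real
  assumes "B * q = 0 \<Longrightarrow> c = 0"
  shows "(cmod (cnj c / of_real (B * q)))\<^sup>2 * B * q - 2 * Re ((cnj c / of_real (B * q)) * c) + X
     = X - (cmod c)\<^sup>2 / (B * q)"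
proof (cases "B * q = 0")
  case True
  then show ?thesis using assms by simp
next
  case False
  define K where "K = B * q"
  have K: "K \<noteq> 0" using False unfolding K_def by simp
  have e1: "(cmod (cnj c / of_real K))\<^sup>2 * K = (cmod c)\<^sup>2 / K"
  proof -
    have "cmod (cnj c / of_real K) = cmod c / \<bar>K\<bar>" by (simp add: norm_divide)
    then have "(cmod (cnj c / of_real K))\<^sup>2 = (cmod c)\<^sup>2 / K\<^sup>2" by (simp add: power_divide)
    then show ?thesis using K by (simp add: power2_eq_square)
  qed
  have e2: "Re ((cnj c / of_real K) * c) = (cmod c)\<^sup>2 / K"
  proof -
    have "(cnj c / of_real K) * c = (c * cnj c) / of_real K"
      by (simp add: mult.commute)
    also have "\<dots> = of_real ((cmod c)\<^sup>2 / K)"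
      by (simp only: mult_cnj_of_real of_real_divide)
    finally have ee: "(cnj c / of_real K) * c = of_real ((cmod c)\<^sup>2 / K)" .
    show ?thesis by (subst ee) (rule Re_complex_of_real)
  qed
  have l: "(cmod (cnj c / of_real (B * q)))\<^sup>2 * B * q = (cmod (cnj c / of_real K))\<^sup>2 * K"
    by (simp only: K_def mult.assoc)
  have r: "Re ((cnj c / of_real (B * q)) * c) = Re ((cnj c / of_real K) * c)"
    by (simp only: K_def)
  show ?thesis unfolding l r e1 e2 unfolding K_def by linarith
qed



lemma norm_sq_vec: "(norm (v::complex^'n))\<^sup>2 = (\<Sum>i\<in>UNIV. (cmod (v$i))\<^sup>2)"
  by (simp add: norm_vec_def L2_set_def sum_nonneg)

lemma obj_formula:
  fixes M :: "'s measure"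
    and H :: "complex^'u^'b" and j :: "complex^'b"
    and s :: "'s \<Rightarrow> complex^'u" and w :: "'s \<Rightarrow> complex" and n :: "'s \<Rightarrow> complex^'b"
    and Es EJ N0 :: real and a b :: "complex^'b" and \<beta> :: complex
  assumes P: "prob_space M"
    and s_mean: "\<And>i. integrable M (\<lambda>x. s x $ i) \<and> integral\<^sup>L M (\<lambda>x. s x $ i) = 0"
    and s_cov: "\<And>i k. integrable M (\<lambda>x. s x $ i * cnj (s x $ k)) \<and>
                  integral\<^sup>L M (\<lambda>x. s x $ i * cnj (s x $ k)) = (if i = k then of_real Es else 0)"
    and w_gauss: "cscg M w EJ"
    and n_indep: "prob_space.indep_vars M (\<lambda>_. borel) (\<lambda>i x. n x $ i) UNIV"
    and n_gauss: "\<And>i. cscg M (\<lambda>x. n x $ i) N0"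
    and indep_swn: "indep3 M s w n"
  shows "objective M H j s w n \<beta> b a = (cmod \<beta>)\<^sup>2 * (norm b)\<^sup>2 * Re (cinner a (Cy Es H EJ j N0 *v a))
      - 2 * Re (\<beta> * (of_real EJ * cinner a j * cinner j b)) + EJ * (norm j)\<^sup>2"
proof -
  define z where "z = (\<lambda>x. cinner a (rx H (s x) j (w x) (n x)))"
  note mm = moments[OF P s_mean s_cov w_gauss n_indep n_gauss indep_swn]
  have m1: "sqi M z" unfolding z_def by (rule mm(1))
  have m2: "sqi M w" by (rule mm(2))
  have m3: "ip M z z = of_real (Re (cinner a (Cy Es H EJ j N0 *v a)))" unfolding z_def by (rule mm(3))
  have m5: "ip M z w = of_real EJ * cinner a j" unfolding z_def by (rule mm(5))
  have m6: "ip M w w = of_real EJ" by (rule mm(6))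
  note m = m1 m2 m3 m3 m5 m6
  define q where "q = Re (cinner a (Cy Es H EJ j N0 *v a))"
  define R where "R = of_real EJ * cinner a j"
  define V where "V i = (\<lambda>x. (\<beta> * b$i) * z x + (- j$i) * w x)" for i
  have sqV: "sqi M (V i)" for i
    unfolding V_def by (intro sqi_add sqi_scale m(1,2))
  have integrand: "(\<lambda>x. (norm ((\<beta> * cinner a (rx H (s x) j (w x) (n x))) *s b - w x *s j))\<^sup>2)
      = (\<lambda>x. \<Sum>i\<in>UNIV. (cmod (V i x))\<^sup>2)"
    by (rule ext) (simp add: norm_sq_vec V_def z_def algebra_simps)
  have "objective M H j s w n \<beta> b a = (\<Sum>i\<in>UNIV. integral\<^sup>L M (\<lambda>x. (cmod (V i x))\<^sup>2))"
    unfolding objective_def integrand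
    by (rule Bochner_Integration.integral_sum) (simp add: sqi_sq_int[OF sqV])
  also have "\<dots> = (\<Sum>i\<in>UNIV. Re (ip M (V i) (V i)))"
    by (simp add: ip_self[OF sqV])
  also have "\<dots> = (\<Sum>i\<in>UNIV. (cmod (\<beta> * b$i))\<^sup>2 * q + 2 * Re ((\<beta> * b$i) * cnj (- j$i) * R) + (cmod (- j$i))\<^sup>2 * EJ)"
  proof (rule sum.cong[OF refl])
    fix i
    show "Re (ip M (V i) (V i)) = (cmod (\<beta> * b$i))\<^sup>2 * q + 2 * Re ((\<beta> * b$i) * cnj (- j$i) * R) + (cmod (- j$i))\<^sup>2 * EJ"
      unfolding V_def ip2lin[OF m(1,2)] m(3) m(5) m(6) q_def[symmetric] R_def[symmetric]
      by (rule alg1)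
  qed
  also have "\<dots> = (cmod \<beta>)\<^sup>2 * (norm b)\<^sup>2 * q - 2 * Re (\<beta> * (R * cinner j b)) + EJ * (norm j)\<^sup>2"
  proof -
    have t1: "(\<Sum>i\<in>UNIV. (cmod (\<beta> * b$i))\<^sup>2 * q) = (cmod \<beta>)\<^sup>2 * (norm b)\<^sup>2 * q"
      by (simp add: norm_sq_vec norm_mult power_mult_distrib sum_distrib_left sum_distrib_right mult_ac)
    have t3: "(\<Sum>i\<in>UNIV. (cmod (- j$i))\<^sup>2 * EJ) = EJ * (norm j)\<^sup>2"
      by (simp add: norm_sq_vec sum_distrib_left mult_ac)
    have "(\<Sum>i\<in>UNIV. (\<beta> * b$i) * cnj (- j$i) * R) = - (\<beta> * (R * cinner j b))"
      by (simp add: cinner_def sum_distrib_left sum_negf[symmetric] mult_ac)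
    note ss = this
    have a1: "(\<Sum>i\<in>UNIV. 2 * Re ((\<beta> * b$i) * cnj (- j$i) * R)) = 2 * Re (\<Sum>i\<in>UNIV. (\<beta> * b$i) * cnj (- j$i) * R)"
      by (simp only: Re_sum sum_distrib_left)
    have t2: "(\<Sum>i\<in>UNIV. 2 * Re ((\<beta> * b$i) * cnj (- j$i) * R)) = - 2 * Re (\<beta> * (R * cinner j b))"
      unfolding a1 ss by simp
    show ?thesis by (simp only: sum.distrib t1 t2 t3)
  qed
  finally show ?thesis unfolding q_def R_def by (simp add: mult_ac)
qed



lemma cnj_cinner: "cnj (cinner x y) = cinner y x"
  by (simp add: cinner_def cnj_sum mult.commute)

lemma cmod_cinner_sym: "cmod (cinner x y) = cmod (cinner y x)"
  by (metis cnj_cinner complex_mod_cnj)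

lemma ratio_split:
  fixes EJ B q :: real and x y :: complex
  shows "(cmod (of_real EJ * x * y))\<^sup>2 / (B * q) = EJ\<^sup>2 * ((cmod y)\<^sup>2 / B * ((cmod x)\<^sup>2 / q))"
proof -
  have "(cmod (of_real EJ * x * y))\<^sup>2 = EJ\<^sup>2 * ((cmod y)\<^sup>2 * (cmod x)\<^sup>2)"
    by (simp add: norm_mult power_mult_distrib mult_ac)
  then show ?thesis by (simp add: times_divide_times_eq)
qed

theorem proposition1:
  fixes M :: "'s measure"
    and H :: "complex^'u^'b" and j :: "complex^'b"
    and s :: "'s \<Rightarrow> complex^'u" and w :: "'s \<Rightarrow> complex" and n :: "'s \<Rightarrow> complex^'b"
    and Es EJ N0 :: real
    and \<A> \<B> :: "complex set"
    and \<beta>h :: complex and bh ah :: "complex^'b"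
  assumes P: "prob_space M"
    and s_indep: "prob_space.indep_vars M (\<lambda>_. borel) (\<lambda>i x. s x $ i) UNIV"
    and s_mean: "\<And>i. integrable M (\<lambda>x. s x $ i) \<and> integral\<^sup>L M (\<lambda>x. s x $ i) = 0"
    and s_cov: "\<And>i k. integrable M (\<lambda>x. s x $ i * cnj (s x $ k)) \<and>
                  integral\<^sup>L M (\<lambda>x. s x $ i * cnj (s x $ k)) = (if i = k then of_real Es else 0)"
    and w_gauss: "cscg M w EJ"
    and n_indep: "prob_space.indep_vars M (\<lambda>_. borel) (\<lambda>i x. n x $ i) UNIV"
    and n_gauss: "\<And>i. cscg M (\<lambda>x. n x $ i) N0"
    and indep_swn: "indep3 M s w n"
    and bh_in: "\<forall>i. bh $ i \<in> \<B>"
    and bh_max: "\<And>b. \<forall>i. b $ i \<in> \<B> \<Longrightarrow>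
        (cmod (cinner j b))\<^sup>2 / (norm b)\<^sup>2 \<le> (cmod (cinner j bh))\<^sup>2 / (norm bh)\<^sup>2"
    and ah_in: "\<forall>i. ah $ i \<in> \<A>"
    and ah_max: "\<And>a. \<forall>i. a $ i \<in> \<A> \<Longrightarrow>
        (cmod (cinner j a))\<^sup>2 / Re (cinner a (Cy Es H EJ j N0 *v a))
          \<le> (cmod (cinner j ah))\<^sup>2 / Re (cinner ah (Cy Es H EJ j N0 *v ah))"
    and \<beta>h_def: "\<beta>h = of_real EJ * cinner j ah * cinner bh j /
        (of_real ((norm bh)\<^sup>2) * cinner ah (Cy Es H EJ j N0 *v ah))"
  shows "\<forall>\<beta> b a. (\<forall>i. b $ i \<in> \<B>) \<longrightarrow> (\<forall>i. a $ i \<in> \<A>) \<longrightarrow>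
           objective M H j s w n \<beta>h bh ah \<le> objective M H j s w n \<beta> b a"
proof (intro allI impI)
  fix \<beta> :: complex and b a :: "complex^'b"
  assume bin: "\<forall>i. b $ i \<in> \<B>" and ain: "\<forall>i. a $ i \<in> \<A>"
  note mm = moments[OF P s_mean s_cov w_gauss n_indep n_gauss indep_swn]
  note OF = obj_formula[OF P s_mean s_cov w_gauss n_indep n_gauss indep_swn]
  define q where "q a' = Re (cinner a' (Cy Es H EJ j N0 *v a'))" for a'
  define c where "c b' a' = of_real EJ * cinner a' j * cinner j b'" for b' a'
  define X where "X = EJ * (norm j)\<^sup>2"
  have EJ: "0 < EJ" by (rule mm(8))
  have qge: "EJ * (cmod (cinner a' j))\<^sup>2 \<le> q a'" for a' unfolding q_def by (rule mm(7))
  have q0: "0 \<le> q a'" for a'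
    using qge[of a'] EJ by (smt (verit) mult_nonneg_nonneg zero_le_power2)
  have cond: "(norm b')\<^sup>2 * q a' = 0 \<Longrightarrow> c b' a' = 0" for b' a'
  proof -
    assume "(norm b')\<^sup>2 * q a' = 0"
    then consider "norm b' = 0" | "q a' = 0" by auto
    then show "c b' a' = 0"
    proof cases
      case 1
      then have "b' = 0" by simp
      then show ?thesis by (simp add: c_def cinner_def)
    next
      case 2
      then have "EJ * (cmod (cinner a' j))\<^sup>2 \<le> 0" using qge[of a'] by simp
      then have "cmod (cinner a' j) = 0" using EJ
        by (smt (verit) mult_pos_pos zero_less_power2 norm_ge_zero)
      then show ?thesis by (simp add: c_def)
    qed
  qed
  have lower: "X - (cmod (c b a))\<^sup>2 / ((norm b)\<^sup>2 * q a) \<le> objective M H j s w n \<beta> b a"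
    unfolding OF[where \<beta>=\<beta> and b=b and a=a] q_def[symmetric] c_def[symmetric] X_def[symmetric]
    by (rule key1[OF zero_le_power2 q0 cond])
  have bh_eq: "\<beta>h = cnj (c bh ah) / of_real ((norm bh)\<^sup>2 * q ah)"
  proof -
    have "cinner ah (Cy Es H EJ j N0 *v ah) = of_real (q ah)" unfolding q_def by (rule mm(4))
    moreover have "cnj (c bh ah) = of_real EJ * cinner j ah * cinner bh j"
      by (simp add: c_def cnj_cinner)
    ultimately show ?thesis unfolding \<beta>h_def by simp
  qed
  have opt: "objective M H j s w n \<beta>h bh ah = X - (cmod (c bh ah))\<^sup>2 / ((norm bh)\<^sup>2 * q ah)"
    unfolding OF[where \<beta>=\<beta>h and b=bh and a=ah] q_def[symmetric] c_def[symmetric] X_def[symmetric]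
    unfolding bh_eq
    by (rule key2[OF cond])
  have r: "(cmod (c b' a'))\<^sup>2 / ((norm b')\<^sup>2 * q a') =
      EJ\<^sup>2 * ((cmod (cinner j b'))\<^sup>2 / (norm b')\<^sup>2 * ((cmod (cinner j a'))\<^sup>2 / q a'))" for b' a'
    unfolding c_def ratio_split cmod_cinner_sym[of a' j] ..
  have rb: "(cmod (cinner j b))\<^sup>2 / (norm b)\<^sup>2 \<le> (cmod (cinner j bh))\<^sup>2 / (norm bh)\<^sup>2"
    using bh_max[OF bin] .
  have ra: "(cmod (cinner j a))\<^sup>2 / q a \<le> (cmod (cinner j ah))\<^sup>2 / q ah"
    using ah_max[OF ain] unfolding q_def .
  have "(cmod (cinner j b))\<^sup>2 / (norm b)\<^sup>2 * ((cmod (cinner j a))\<^sup>2 / q a)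
     \<le> (cmod (cinner j bh))\<^sup>2 / (norm bh)\<^sup>2 * ((cmod (cinner j ah))\<^sup>2 / q ah)"
    by (rule mult_mono[OF rb ra]) (simp_all add: q0)
  then have "(cmod (c b a))\<^sup>2 / ((norm b)\<^sup>2 * q a) \<le> (cmod (c bh ah))\<^sup>2 / ((norm bh)\<^sup>2 * q ah)"
    unfolding r by (rule mult_left_mono) simp
  then show "objective M H j s w n \<beta>h bh ah \<le> objective M H j s w n \<beta> b a"
    using lower opt by linarith
qed

end
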